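(* Let $X_1,\ldots,X_n$ be non-empty sets, $\Omega=X_1\times\cdots\times X_n$, and let $F\subset\Omega$ be a full set. If $F$ has finitely many related components, say $F=\bigcup_{i=1}^k R_i$ with $R_1,\ldots,R_k$ the distinct related components of $F$, then $k=1$.
   Context: For $1\le i\le n$, $\Pi_i:\Omega\to X_i$ denotes the canonical projection. A subset $S\subset\Omega$ is good if every complex-valued function $f$ on $S$ can be written as $f(x_1,\ldots,x_n)=u_1(x_1)+\cdots+u_n(x_n)$ for all $(x_1,\ldots,x_n)\in S$, for suitable complex-valued functions $u_i$ on $X_i$. A subset $S\subset\Omega$ is full if $S$ is a maximal good subset of $\Pi_1S\times\cdots\times\Pi_nS$ (i.e. $S$ is good and no good subset of $\Pi_1S\times\cdots\times\Pi_nS$ strictly contains $S$). For a good set $S$, two points $x,y\in S$ are related if there is a finite full subset of $S$ containing both $x$ and $y$; this is an equivalence relation on $S$, and its equivalence classes are the related components of $S$. *)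

theory Defs
  imports Complex_Main
begin

text \<open>Points of Omega = X_1 x ... x X_n are functions from a finite index type 'i
  (with CARD('i) = n) to a common value type 'a; the i-th coordinate is x i.\<close>

definition proj :: "'i \<Rightarrow> ('i \<Rightarrow> 'a) set \<Rightarrow> 'a set" where
  "proj i S = (\<lambda>x. x i) ` S"

definition box :: "('i \<Rightarrow> 'a) set \<Rightarrow> ('i \<Rightarrow> 'a) set" where
  "box S = {y. \<forall>i. y i \<in> proj i S}"

definition good :: "('i::finite \<Rightarrow> 'a) set \<Rightarrow> bool" where
  "good S \<longleftrightarrow> (\<forall>f :: ('i \<Rightarrow> 'a) \<Rightarrow> complex.
      \<exists>u :: 'i \<Rightarrow> 'a \<Rightarrow> complex. \<forall>x\<in>S. f x = (\<Sum>i\<in>UNIV. u i (x i)))"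

definition full :: "('i::finite \<Rightarrow> 'a) set \<Rightarrow> bool" where
  "full S \<longleftrightarrow> S \<subseteq> box S \<and> good S \<and>
     (\<forall>T. good T \<and> S \<subseteq> T \<and> T \<subseteq> box S \<longrightarrow> T = S)"

definition related :: "('i::finite \<Rightarrow> 'a) set \<Rightarrow> ('i \<Rightarrow> 'a) \<Rightarrow> ('i \<Rightarrow> 'a) \<Rightarrow> bool" where
  "related S x y \<longleftrightarrow> (\<exists>T. finite T \<and> full T \<and> T \<subseteq> S \<and> x \<in> T \<and> y \<in> T)"

definition related_components :: "('i::finite \<Rightarrow> 'a) set \<Rightarrow> ('i \<Rightarrow> 'a) set set" where
  "related_components S = S // {(x, y). related S x y}"

end

theory Submission
  imports Defs
begin

definition ev :: "('i::finite \<Rightarrow> 'a \<Rightarrow> complex) \<Rightarrow> ('i \<Rightarrow> 'a) \<Rightarrow> complex" where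
  "ev u x = (\<Sum>i\<in>UNIV. u i (x i))"

definition pfull :: "('i::finite \<Rightarrow> 'a) set \<Rightarrow> bool" where
  "pfull S \<longleftrightarrow> (\<forall>u. (\<forall>x\<in>S. ev u x = 0) \<longrightarrow> (\<forall>z\<in>box S. ev u z = 0))"

lemma good_subset: "good F \<Longrightarrow> T \<subseteq> F \<Longrightarrow> good T"
  unfolding good_def by blast

lemma ev_lin: "ev (\<lambda>i a. v i a + c * u i a) x = ev v x + c * ev u x"
  by (simp add: ev_def sum.distrib sum_distrib_left)

lemma sub_box: "S \<subseteq> box S"
  by (auto simp: box_def proj_def)

lemma full_imp_pfull:
  assumes "full S" shows "pfull S"
  unfolding pfull_def
proof (intro allI impI ballI)
  fix u z assume van: "\<forall>x\<in>S. ev u x = 0" and z: "z \<in> box S"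
  show "ev u z = 0"
  proof (rule ccontr)
    assume nz: "ev u z \<noteq> 0"
    then have zS: "z \<notin> S" using van by auto
    have gS: "good S" using assms by (simp add: full_def)
    have "good (insert z S)"
      unfolding good_def
    proof
      fix f :: "('a \<Rightarrow> 'b) \<Rightarrow> complex"
      obtain v where v: "\<forall>x\<in>S. f x = (\<Sum>i\<in>UNIV. v i (x i))"
        using gS unfolding good_def by blast
      define c where "c = (f z - ev v z) / ev u z"
      have "\<forall>x\<in>insert z S. f x = ev (\<lambda>i a. v i a + c * u i a) x"
      proof
        fix x assume x: "x \<in> insert z S"
        show "f x = ev (\<lambda>i a. v i a + c * u i a) x"
        proof (cases "x = z")
          case True
          have "c * ev u z = f z - ev v z" using nz by (simp add: c_def)
          then show ?thesis using True ev_lin[of v c u z] by simp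
        next
          case False
          then have "x \<in> S" using x by blast
          then have "f x = ev v x" "ev u x = 0" using v van unfolding ev_def by auto
          then show ?thesis by (simp add: ev_lin)
        qed
      qed
      then show "\<exists>w. \<forall>x\<in>insert z S. f x = (\<Sum>i\<in>UNIV. w i (x i))"
        unfolding ev_def by (intro exI[of _ "\<lambda>i a. v i a + c * u i a"])
    qed
    moreover have "insert z S \<subseteq> box S" using z sub_box by blast
    ultimately have "insert z S = S" using assms unfolding full_def by blast
    then show False using zS by blast
  qed
qed

lemma pfull_imp_full:
  assumes "good S" "pfull S" shows "full S"
  unfolding full_def
proof (intro conjI allI impI)
  show "S \<subseteq> box S" by (rule sub_box)
  show "good S" by fact
  fix T assume a: "good T \<and> S \<subseteq> T \<and> T \<subseteq> box S"
  show "T = S"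
  proof (rule ccontr)
    assume "T \<noteq> S"
    then obtain z where z: "z \<in> T" "z \<notin> S" using a by blast
    obtain u where u: "\<forall>x\<in>T. (\<lambda>x. if x = z then 1 else 0 :: complex) x = (\<Sum>i\<in>UNIV. u i (x i))"
    proof -
      have g: "\<forall>f. \<exists>u. \<forall>x\<in>T. f x = (\<Sum>i\<in>UNIV. u i (x i) :: complex)" using a unfolding good_def by (rule conjunct1)
      show ?thesis using spec[OF g, of "\<lambda>x. if x = z then 1 else 0 :: complex"] that by blast
    qed
    have "\<forall>x\<in>S. ev u x = 0"
    proof
      fix x assume x: "x \<in> S"
      then have "x \<in> T" "x \<noteq> z" using a z by auto
      then show "ev u x = 0" using u unfolding ev_def by force
    qed
    then have "ev u z = 0" using assms(2) a z unfolding pfull_def by blast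
    moreover have "ev u z = 1" using u z unfolding ev_def by force
    ultimately show False by simp
  qed
qed

lemma box_single: "box {x} = {x}"
  by (auto simp: box_def proj_def)

lemma full_single: "full {x :: 'i::finite \<Rightarrow> 'a}"
proof (rule pfull_imp_full)
  show "good {x}"
    unfolding good_def
  proof
    fix f :: "('i \<Rightarrow> 'a) \<Rightarrow> complex"
    have "f x = (\<Sum>i\<in>UNIV. (\<lambda>i a. if i = undefined then f x else 0) i (x i))"
      by simp
    then show "\<exists>u. \<forall>y\<in>{x}. f y = (\<Sum>i\<in>UNIV. u i (y i))"
      by (intro exI[of _ "\<lambda>i a. if i = undefined then f x else 0"]) simp
  qed
  show "pfull {x}" unfolding pfull_def box_single by blast
qed

lemma ev_upd: "ev u (r(i:=a)) + u i (r i) = ev u r + u i a"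
proof -
  have "ev u (r(i:=a)) = u i a + (\<Sum>j\<in>UNIV-{i}. u j ((r(i:=a)) j))"
    unfolding ev_def by (subst sum.remove[of UNIV i]) auto
  also have "(\<Sum>j\<in>UNIV-{i}. u j ((r(i:=a)) j)) = (\<Sum>j\<in>UNIV-{i}. u j (r j))"
    by (rule sum.cong) auto
  finally have 1: "ev u (r(i:=a)) = u i a + (\<Sum>j\<in>UNIV-{i}. u j (r j))" .
  have 2: "ev u r = u i (r i) + (\<Sum>j\<in>UNIV-{i}. u j (r j))"
    unfolding ev_def by (subst sum.remove[of UNIV i]) auto
  show ?thesis using 1 2 by simp
qed

lemma pfull_const:
  assumes "pfull S" "r \<in> S" "\<forall>x\<in>S. ev u x = 0" "a \<in> proj i S"
  shows "u i a = u i (r i)"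
proof -
  have "r(i:=a) \<in> box S" using assms(2,4) by (auto simp: box_def proj_def)
  then have "ev u (r(i:=a)) = 0" using assms unfolding pfull_def by blast
  moreover have "ev u r = 0" using assms by blast
  ultimately show ?thesis using ev_upd[of u r i a] by simp
qed

lemma union_full:
  assumes "good F" "T1 \<subseteq> F" "T2 \<subseteq> F" "full T1" "full T2" "r \<in> T1" "r \<in> T2"
  shows "full (T1 \<union> T2)"
proof (rule pfull_imp_full)
  show "good (T1 \<union> T2)" using assms(2,3) by (intro good_subset[OF assms(1)]) blast
  have p1: "pfull T1" and p2: "pfull T2" using assms full_imp_pfull by auto
  show "pfull (T1 \<union> T2)"
    unfolding pfull_def
  proof (intro allI impI ballI)
    fix u z assume van: "\<forall>x\<in>T1 \<union> T2. ev u x = 0" and z: "z \<in> box (T1 \<union> T2)"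
    have "\<And>i. u i (z i) = u i (r i)"
    proof -
      fix i
      have "z i \<in> proj i T1 \<or> z i \<in> proj i T2" using z by (auto simp: box_def proj_def)
      then show "u i (z i) = u i (r i)"
        using pfull_const[OF p1 assms(6)] pfull_const[OF p2 assms(7)] van by blast
    qed
    then have "ev u z = ev u r" unfolding ev_def by simp
    then show "ev u z = 0" using van assms(6) by simp
  qed
qed

lemma related_in: "related F x y \<Longrightarrow> x \<in> F \<and> y \<in> F"
  unfolding related_def by blast

lemma related_refl: "x \<in> F \<Longrightarrow> related F x x"
  unfolding related_def using full_single by blast

lemma extend:
  assumes "finite P" "good F" "r \<in> F" "P \<subseteq> {y. related F r y}"
  shows "\<exists>T. finite T \<and> full T \<and> T \<subseteq> F \<and> r \<in> T \<and> P \<subseteq> T"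
  using assms(1,4)
proof (induction P rule: finite_induct)
  case empty
  then show ?case using assms full_single[of r] by auto
next
  case (insert p P)
  then obtain T where T: "finite T" "full T" "T \<subseteq> F" "r \<in> T" "P \<subseteq> T" by auto
  from insert obtain T' where T': "finite T'" "full T'" "T' \<subseteq> F" "r \<in> T'" "p \<in> T'"
    unfolding related_def by auto
  have "full (T \<union> T')" using union_full[OF assms(2) T(3) T'(3) T(2) T'(2) T(4) T'(4)] .
  then show ?case using T T' by auto
qed

lemma all_related:
  fixes F :: "('i::finite \<Rightarrow> 'a) set"
  assumes fullF: "full F" and finQ: "finite (related_components F)"
    and xF: "x \<in> F" and yF: "y \<in> F"
  shows "related F x y"
proof -
  define rel where "rel = {(x, y). related F x y}"
  define Q where "Q = related_components F"
  have QF: "Q = F // rel" unfolding Q_def related_components_def rel_def by simp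
  have goodF: "good F" using fullF by (simp add: full_def)
  have pF: "pfull F" using fullF by (rule full_imp_pfull)
  have img: "\<And>r. rel `` {r} = {y. related F r y}" unfolding rel_def by auto
  have cls: "\<And>w. w \<in> F \<Longrightarrow> rel `` {w} \<in> Q \<and> w \<in> rel `` {w}"
    using related_refl unfolding QF quotient_def img by auto
  have "\<forall>R\<in>Q. \<exists>r. r \<in> F \<and> R = rel `` {r}" unfolding QF quotient_def by auto
  then obtain rep where rep: "\<And>R. R \<in> Q \<Longrightarrow> rep R \<in> F \<and> R = rel `` {rep R}" by metis
  define wit where "wit R R' i = (SOME pq. fst pq \<in> R \<and> snd pq \<in> R' \<and> fst pq i = snd pq i)"
    for R R' :: "('i \<Rightarrow> 'a) set" and i :: 'i
  define S0 where "S0 = {x, y} \<union> (\<Union>R\<in>Q. \<Union>R'\<in>Q. \<Union>i. {fst (wit R R' i), snd (wit R R' i)})"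
  have finS0: "finite S0" unfolding S0_def using finQ Q_def by auto
  have "\<forall>R\<in>Q. \<exists>T. finite T \<and> full T \<and> T \<subseteq> F \<and> rep R \<in> T \<and> S0 \<inter> R \<subseteq> T"
  proof
    fix R assume R: "R \<in> Q"
    show "\<exists>T. finite T \<and> full T \<and> T \<subseteq> F \<and> rep R \<in> T \<and> S0 \<inter> R \<subseteq> T"
      apply (rule extend)
      using finS0 goodF rep[OF R] img by auto
  qed
  then obtain TT where TT: "\<And>R. R \<in> Q \<Longrightarrow> finite (TT R) \<and> full (TT R) \<and> TT R \<subseteq> F \<and> rep R \<in> TT R \<and> S0 \<inter> R \<subseteq> TT R"
    by metis
  have TTsub: "\<And>R. R \<in> Q \<Longrightarrow> TT R \<subseteq> R"
  proof
    fix R z assume R: "R \<in> Q" and z: "z \<in> TT R"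
    have "related F (rep R) z" unfolding related_def using TT[OF R] z by blast
    then show "z \<in> R" using rep[OF R] img by auto
  qed
  define T where "T = (\<Union>R\<in>Q. TT R)"
  have finT: "finite T" unfolding T_def using finQ Q_def TT by auto
  have TF: "T \<subseteq> F" unfolding T_def using TT by auto
  have goodT: "good T" using good_subset[OF goodF TF] .
  have pT: "pfull T"
    unfolding pfull_def
  proof (intro allI impI ballI)
    fix u z assume van: "\<forall>w\<in>T. ev u w = 0" and z: "z \<in> box T"
    define t where "t R i = u i (rep R i)" for R i
    have tconst: "\<And>R i a. R \<in> Q \<Longrightarrow> a \<in> proj i (TT R) \<Longrightarrow> u i a = t R i"
    proof -
      fix R i a assume R: "R \<in> Q" and a: "a \<in> proj i (TT R)"
      have "pfull (TT R)" using TT[OF R] full_imp_pfull by blast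
      moreover have "\<forall>w\<in>TT R. ev u w = 0" using van R unfolding T_def by blast
      ultimately show "u i a = t R i" unfolding t_def
        using pfull_const[of "TT R" "rep R" u a i] TT[OF R] a by blast
    qed
    have cons: "\<And>R R' i a. R \<in> Q \<Longrightarrow> R' \<in> Q \<Longrightarrow> a \<in> proj i R \<Longrightarrow> a \<in> proj i R' \<Longrightarrow> t R i = t R' i"
    proof -
      fix R R' i a assume R: "R \<in> Q" and R': "R' \<in> Q" and a: "a \<in> proj i R" "a \<in> proj i R'"
      obtain p q where "p \<in> R" "q \<in> R'" "p i = a" "q i = a" using a unfolding proj_def by auto
      then have ex: "\<exists>pq. fst pq \<in> R \<and> snd pq \<in> R' \<and> fst pq i = snd pq i"
        by (intro exI[of _ "(p, q)"]) auto
      have w: "fst (wit R R' i) \<in> R \<and> snd (wit R R' i) \<in> R' \<and> fst (wit R R' i) i = snd (wit R R' i) i"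
        unfolding wit_def using someI_ex[OF ex] .
      have inS: "fst (wit R R' i) \<in> S0" "snd (wit R R' i) \<in> S0" unfolding S0_def using R R' by blast+
      have p1: "fst (wit R R' i) \<in> TT R" using TT[OF R] inS w by blast
      have p2: "snd (wit R R' i) \<in> TT R'" using TT[OF R'] inS w by blast
      have "t R i = u i (fst (wit R R' i) i)"
        using tconst[OF R, of "fst (wit R R' i) i" i] p1 unfolding proj_def by auto
      also have "\<dots> = u i (snd (wit R R' i) i)" using w by simp
      also have "\<dots> = t R' i"
        using tconst[OF R', of "snd (wit R R' i) i" i] p2 unfolding proj_def by auto
      finally show "t R i = t R' i" .
    qed
    define v where "v i a = t (SOME R. R \<in> Q \<and> a \<in> proj i R) i" for i a
    have vR: "\<And>R i a. R \<in> Q \<Longrightarrow> a \<in> proj i R \<Longrightarrow> v i a = t R i"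
    proof -
      fix R i a assume R: "R \<in> Q" and a: "a \<in> proj i R"
      have "(SOME R. R \<in> Q \<and> a \<in> proj i R) \<in> Q \<and> a \<in> proj i (SOME R. R \<in> Q \<and> a \<in> proj i R)"
        using someI[of "\<lambda>R. R \<in> Q \<and> a \<in> proj i R" R] R a by blast
      then show "v i a = t R i" unfolding v_def using cons R a by blast
    qed
    have vF: "\<forall>w\<in>F. ev v w = 0"
    proof
      fix w assume w: "w \<in> F"
      define R where "R = rel `` {w}"
      have R: "R \<in> Q" "w \<in> R" using cls[OF w] R_def by auto
      have "ev v w = (\<Sum>i\<in>UNIV. t R i)" unfolding ev_def
        by (rule sum.cong) (auto intro!: vR[OF R(1)] simp: proj_def R(2))
      also have "\<dots> = ev u (rep R)" unfolding ev_def t_def by simp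
      also have "\<dots> = 0" using van TT[OF R(1)] unfolding T_def using R(1) by blast
      finally show "ev v w = 0" .
    qed
    have zF: "z \<in> box F" using z TF unfolding box_def proj_def by blast
    have "\<And>i. u i (z i) = v i (z i)"
    proof -
      fix i
      have "z i \<in> proj i T" using z unfolding box_def by blast
      then obtain R where R: "R \<in> Q" "z i \<in> proj i (TT R)" unfolding T_def proj_def by blast
      have "z i \<in> proj i R" using R TTsub[OF R(1)] unfolding proj_def by blast
      then show "u i (z i) = v i (z i)" using tconst[OF R] vR[OF R(1)] by simp
    qed
    then have "ev u z = ev v z" unfolding ev_def by simp
    also have "\<dots> = 0" using pF vF zF unfolding pfull_def by blast
    finally show "ev u z = 0" .
  qed
  have fT: "full T" using pfull_imp_full[OF goodT pT] .
  have "x \<in> T"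
  proof -
    have "x \<in> S0 \<inter> rel `` {x}" using cls[OF xF] unfolding S0_def by blast
    then show ?thesis using TT cls[OF xF] unfolding T_def by blast
  qed
  moreover have "y \<in> T"
  proof -
    have "y \<in> S0 \<inter> rel `` {y}" using cls[OF yF] unfolding S0_def by blast
    then show ?thesis using TT cls[OF yF] unfolding T_def by blast
  qed
  ultimately show ?thesis unfolding related_def using finT fT TF by blast
qed

theorem theorem1:
  fixes X :: "'i::finite \<Rightarrow> 'a set" and F :: "('i \<Rightarrow> 'a) set"
  assumes "\<forall>i. X i \<noteq> {}"
    and "F \<subseteq> {x. \<forall>i. x i \<in> X i}"
    and "full F"
    and "F \<noteq> {}"
    and "finite (related_components F)"
  shows "card (related_components F) = 1"
proof -
  define rel where "rel = {(x, y). related F x y}"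
  have img: "\<And>w. w \<in> F \<Longrightarrow> rel `` {w} = F"
    using all_related[OF assms(3,5)] related_in unfolding rel_def by blast
  have "related_components F = {F}"
    unfolding related_components_def rel_def[symmetric] quotient_def
    using img assms(4) by auto
  then show ?thesis by simp
qed

end
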